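(* There is no $4$-$\gamma_t$-critical graph $G$ of order $\Delta(G)+4$ with $\Delta(G)\in\{3,5,7\}$ and $\delta(G)\ge 2$.
   Context: All graphs are finite and simple; $\Delta(G)$, $\delta(G)$ are maximum and minimum degree. A set $S\subseteq V(G)$ is a total dominating set if every vertex of $G$ is adjacent to some vertex of $S$; $\gamma_t(G)$ is the minimum size of such a set. A leaf is a vertex of degree one. A graph $G$ with no isolated vertex is $\gamma_t$-critical if for every vertex $v$ not adjacent to a leaf, $\gamma_t(G-v)<\gamma_t(G)$; it is $m$-$\gamma_t$-critical if moreover $\gamma_t(G)=m$. *)

theory Defs
  imports Main "HOL-Library.Extended_Nat"
begin

definition simple_graph :: "'a set \<Rightarrow> ('a \<Rightarrow> 'a \<Rightarrow> bool) \<Rightarrow> bool" where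
  "simple_graph V E \<longleftrightarrow> finite V \<and> (\<forall>u v. E u v \<longrightarrow> u \<in> V \<and> v \<in> V)
     \<and> (\<forall>u v. E u v \<longrightarrow> E v u) \<and> (\<forall>v. \<not> E v v)"

text \<open>Open neighbourhood of v inside vertex set V (so deleting vertices = shrinking V).\<close>
definition nbhd :: "'a set \<Rightarrow> ('a \<Rightarrow> 'a \<Rightarrow> bool) \<Rightarrow> 'a \<Rightarrow> 'a set" where
  "nbhd V E v = {u \<in> V. E v u}"

definition deg :: "'a set \<Rightarrow> ('a \<Rightarrow> 'a \<Rightarrow> bool) \<Rightarrow> 'a \<Rightarrow> nat" where
  "deg V E v = card (nbhd V E v)"

definition max_deg :: "'a set \<Rightarrow> ('a \<Rightarrow> 'a \<Rightarrow> bool) \<Rightarrow> nat" where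
  "max_deg V E = Max (deg V E ` V)"

definition min_deg :: "'a set \<Rightarrow> ('a \<Rightarrow> 'a \<Rightarrow> bool) \<Rightarrow> nat" where
  "min_deg V E = Min (deg V E ` V)"

definition no_isolated :: "'a set \<Rightarrow> ('a \<Rightarrow> 'a \<Rightarrow> bool) \<Rightarrow> bool" where
  "no_isolated V E \<longleftrightarrow> (\<forall>v\<in>V. nbhd V E v \<noteq> {})"

definition is_leaf :: "'a set \<Rightarrow> ('a \<Rightarrow> 'a \<Rightarrow> bool) \<Rightarrow> 'a \<Rightarrow> bool" where
  "is_leaf V E v \<longleftrightarrow> v \<in> V \<and> deg V E v = 1"

definition total_dom_set :: "'a set \<Rightarrow> ('a \<Rightarrow> 'a \<Rightarrow> bool) \<Rightarrow> 'a set \<Rightarrow> bool" where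
  "total_dom_set V E S \<longleftrightarrow> S \<subseteq> V \<and> (\<forall>v\<in>V. \<exists>s\<in>S. E v s)"

text \<open>Total domination number; it is \<infinity> when no total dominating set exists
  (i.e. when the graph has an isolated vertex).\<close>
definition gamma_t :: "'a set \<Rightarrow> ('a \<Rightarrow> 'a \<Rightarrow> bool) \<Rightarrow> enat" where
  "gamma_t V E = (INF S \<in> {S. total_dom_set V E S}. enat (card S))"

text \<open>G - v is the induced subgraph on V - {v} (same adjacency, smaller vertex set).\<close>
definition gamma_t_critical :: "'a set \<Rightarrow> ('a \<Rightarrow> 'a \<Rightarrow> bool) \<Rightarrow> bool" where
  "gamma_t_critical V E \<longleftrightarrow> no_isolated V E \<and>
     (\<forall>v\<in>V. (\<not> (\<exists>u. E v u \<and> is_leaf V E u)) \<longrightarrow> gamma_t (V - {v}) E < gamma_t V E)"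

definition m_gamma_t_critical :: "nat \<Rightarrow> 'a set \<Rightarrow> ('a \<Rightarrow> 'a \<Rightarrow> bool) \<Rightarrow> bool" where
  "m_gamma_t_critical m V E \<longleftrightarrow> gamma_t_critical V E \<and> gamma_t V E = enat m"

end

theory Submission
  imports Defs
begin

definition H1 :: "('a \<Rightarrow> 'a \<Rightarrow> bool) \<Rightarrow> 'a set \<Rightarrow> 'a set \<Rightarrow> bool" where
 "H1 E P Q \<longleftrightarrow> (\<forall>z\<in>Q. \<exists>u\<in>P. \<not> E z u)"
definition H2 :: "('a \<Rightarrow> 'a \<Rightarrow> bool) \<Rightarrow> 'a set \<Rightarrow> 'a set \<Rightarrow> bool" where
 "H2 E P Q \<longleftrightarrow> (\<forall>y\<in>P. \<forall>z\<in>Q. E y z \<longrightarrow> (\<exists>u\<in>P. \<not> E y u \<and> \<not> E z u))"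
definition H3 :: "('a \<Rightarrow> 'a \<Rightarrow> bool) \<Rightarrow> 'a set \<Rightarrow> 'a set \<Rightarrow> bool" where
 "H3 E P Q \<longleftrightarrow> (\<forall>x\<in>P. \<exists>z\<in>Q. \<not> E x z \<and> ((\<forall>u\<in>P. u \<noteq> x \<longrightarrow> E z u) \<or>
     (\<exists>y\<in>P. y \<noteq> x \<and> \<not> E x y \<and> E y z \<and> (\<forall>u\<in>P. u \<noteq> x \<longrightarrow> E y u \<or> E z u))))"

lemma core_1_2:
  fixes E :: "'a \<Rightarrow> 'a \<Rightarrow> bool"
  assumes sym: "\<And>u w. E u w = E w u" and irr: "\<And>u. \<not> E u u"
  and d: "distinct [x1,w1,w2]"
  and h: "H1 E {x1} {w1,w2}" "H2 E {x1} {w1,w2}" "H3 E {x1} {w1,w2}"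
         "H1 E {w1,w2} {x1}" "H2 E {w1,w2} {x1}" "H3 E {w1,w2} {x1}"
  shows False
proof -
  have s: "E w1 x1 = E x1 w1" "E w2 x1 = E x1 w2" "E w2 w1 = E w1 w2" by (simp_all add: sym)
  have ne: "x1 \<noteq> w1" "x1 \<noteq> w2" "w1 \<noteq> x1" "w1 \<noteq> w2" "w2 \<noteq> x1" "w2 \<noteq> w1" using d by auto
  from h have False
    unfolding H1_def H2_def H3_def by (simp add: irr s ne; satx)
  then show False .
qed

lemma core_1_4:
  fixes E :: "'a \<Rightarrow> 'a \<Rightarrow> bool"
  assumes sym: "\<And>u w. E u w = E w u" and irr: "\<And>u. \<not> E u u"
  and d: "distinct [x1,w1,w2,w3,w4]"
  and h: "H1 E {x1} {w1,w2,w3,w4}" "H2 E {x1} {w1,w2,w3,w4}" "H3 E {x1} {w1,w2,w3,w4}"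
         "H1 E {w1,w2,w3,w4} {x1}" "H2 E {w1,w2,w3,w4} {x1}" "H3 E {w1,w2,w3,w4} {x1}"
  shows False
proof -
  have s: "E w1 x1 = E x1 w1" "E w2 x1 = E x1 w2" "E w2 w1 = E w1 w2" "E w3 x1 = E x1 w3" "E w3 w1 = E w1 w3" "E w3 w2 = E w2 w3" "E w4 x1 = E x1 w4" "E w4 w1 = E w1 w4" "E w4 w2 = E w2 w4" "E w4 w3 = E w3 w4" by (simp_all add: sym)
  have ne: "x1 \<noteq> w1" "x1 \<noteq> w2" "x1 \<noteq> w3" "x1 \<noteq> w4" "w1 \<noteq> x1" "w1 \<noteq> w2" "w1 \<noteq> w3" "w1 \<noteq> w4" "w2 \<noteq> x1" "w2 \<noteq> w1" "w2 \<noteq> w3" "w2 \<noteq> w4" "w3 \<noteq> x1" "w3 \<noteq> w1" "w3 \<noteq> w2" "w3 \<noteq> w4" "w4 \<noteq> x1" "w4 \<noteq> w1" "w4 \<noteq> w2" "w4 \<noteq> w3" using d by auto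
  from h have False
    unfolding H1_def H2_def H3_def by (simp add: irr s ne; satx)
  then show False .
qed

lemma core_1_6:
  fixes E :: "'a \<Rightarrow> 'a \<Rightarrow> bool"
  assumes sym: "\<And>u w. E u w = E w u" and irr: "\<And>u. \<not> E u u"
  and d: "distinct [x1,w1,w2,w3,w4,w5,w6]"
  and h: "H1 E {x1} {w1,w2,w3,w4,w5,w6}" "H2 E {x1} {w1,w2,w3,w4,w5,w6}" "H3 E {x1} {w1,w2,w3,w4,w5,w6}"
         "H1 E {w1,w2,w3,w4,w5,w6} {x1}" "H2 E {w1,w2,w3,w4,w5,w6} {x1}" "H3 E {w1,w2,w3,w4,w5,w6} {x1}"
  shows False
proof -
  have s: "E w1 x1 = E x1 w1" "E w2 x1 = E x1 w2" "E w2 w1 = E w1 w2" "E w3 x1 = E x1 w3" "E w3 w1 = E w1 w3" "E w3 w2 = E w2 w3" "E w4 x1 = E x1 w4" "E w4 w1 = E w1 w4" "E w4 w2 = E w2 w4" "E w4 w3 = E w3 w4" "E w5 x1 = E x1 w5" "E w5 w1 = E w1 w5" "E w5 w2 = E w2 w5" "E w5 w3 = E w3 w5" "E w5 w4 = E w4 w5" "E w6 x1 = E x1 w6" "E w6 w1 = E w1 w6" "E w6 w2 = E w2 w6" "E w6 w3 = E w3 w6" "E w6 w4 = E w4 w6" "E w6 w5 = E w5 w6" by (simp_all add: sym)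
  have ne: "x1 \<noteq> w1" "x1 \<noteq> w2" "x1 \<noteq> w3" "x1 \<noteq> w4" "x1 \<noteq> w5" "x1 \<noteq> w6" "w1 \<noteq> x1" "w1 \<noteq> w2" "w1 \<noteq> w3" "w1 \<noteq> w4" "w1 \<noteq> w5" "w1 \<noteq> w6" "w2 \<noteq> x1" "w2 \<noteq> w1" "w2 \<noteq> w3" "w2 \<noteq> w4" "w2 \<noteq> w5" "w2 \<noteq> w6" "w3 \<noteq> x1" "w3 \<noteq> w1" "w3 \<noteq> w2" "w3 \<noteq> w4" "w3 \<noteq> w5" "w3 \<noteq> w6" "w4 \<noteq> x1" "w4 \<noteq> w1" "w4 \<noteq> w2" "w4 \<noteq> w3" "w4 \<noteq> w5" "w4 \<noteq> w6" "w5 \<noteq> x1" "w5 \<noteq> w1" "w5 \<noteq> w2" "w5 \<noteq> w3" "w5 \<noteq> w4" "w5 \<noteq> w6" "w6 \<noteq> x1" "w6 \<noteq> w1" "w6 \<noteq> w2" "w6 \<noteq> w3" "w6 \<noteq> w4" "w6 \<noteq> w5" using d by auto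
  from h have False
    unfolding H1_def H2_def H3_def by (simp add: irr s ne; satx)
  then show False .
qed

lemma core_2_3:
  fixes E :: "'a \<Rightarrow> 'a \<Rightarrow> bool"
  assumes sym: "\<And>u w. E u w = E w u" and irr: "\<And>u. \<not> E u u"
  and d: "distinct [x1,x2,w1,w2,w3]"
  and h: "H1 E {x1,x2} {w1,w2,w3}" "H2 E {x1,x2} {w1,w2,w3}" "H3 E {x1,x2} {w1,w2,w3}"
         "H1 E {w1,w2,w3} {x1,x2}" "H2 E {w1,w2,w3} {x1,x2}" "H3 E {w1,w2,w3} {x1,x2}"
  shows False
proof -
  have s: "E x2 x1 = E x1 x2" "E w1 x1 = E x1 w1" "E w1 x2 = E x2 w1" "E w2 x1 = E x1 w2" "E w2 x2 = E x2 w2" "E w2 w1 = E w1 w2" "E w3 x1 = E x1 w3" "E w3 x2 = E x2 w3" "E w3 w1 = E w1 w3" "E w3 w2 = E w2 w3" by (simp_all add: sym)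
  have ne: "x1 \<noteq> x2" "x1 \<noteq> w1" "x1 \<noteq> w2" "x1 \<noteq> w3" "x2 \<noteq> x1" "x2 \<noteq> w1" "x2 \<noteq> w2" "x2 \<noteq> w3" "w1 \<noteq> x1" "w1 \<noteq> x2" "w1 \<noteq> w2" "w1 \<noteq> w3" "w2 \<noteq> x1" "w2 \<noteq> x2" "w2 \<noteq> w1" "w2 \<noteq> w3" "w3 \<noteq> x1" "w3 \<noteq> x2" "w3 \<noteq> w1" "w3 \<noteq> w2" using d by auto
  from h have False
    unfolding H1_def H2_def H3_def by (simp add: irr s ne; satx)
  then show False .
qed

lemma core_2_5:
  fixes E :: "'a \<Rightarrow> 'a \<Rightarrow> bool"
  assumes sym: "\<And>u w. E u w = E w u" and irr: "\<And>u. \<not> E u u"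
  and d: "distinct [x1,x2,w1,w2,w3,w4,w5]"
  and h: "H1 E {x1,x2} {w1,w2,w3,w4,w5}" "H2 E {x1,x2} {w1,w2,w3,w4,w5}" "H3 E {x1,x2} {w1,w2,w3,w4,w5}"
         "H1 E {w1,w2,w3,w4,w5} {x1,x2}" "H2 E {w1,w2,w3,w4,w5} {x1,x2}" "H3 E {w1,w2,w3,w4,w5} {x1,x2}"
  shows False
proof -
  have s: "E x2 x1 = E x1 x2" "E w1 x1 = E x1 w1" "E w1 x2 = E x2 w1" "E w2 x1 = E x1 w2" "E w2 x2 = E x2 w2" "E w2 w1 = E w1 w2" "E w3 x1 = E x1 w3" "E w3 x2 = E x2 w3" "E w3 w1 = E w1 w3" "E w3 w2 = E w2 w3" "E w4 x1 = E x1 w4" "E w4 x2 = E x2 w4" "E w4 w1 = E w1 w4" "E w4 w2 = E w2 w4" "E w4 w3 = E w3 w4" "E w5 x1 = E x1 w5" "E w5 x2 = E x2 w5" "E w5 w1 = E w1 w5" "E w5 w2 = E w2 w5" "E w5 w3 = E w3 w5" "E w5 w4 = E w4 w5" by (simp_all add: sym)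
  have ne: "x1 \<noteq> x2" "x1 \<noteq> w1" "x1 \<noteq> w2" "x1 \<noteq> w3" "x1 \<noteq> w4" "x1 \<noteq> w5" "x2 \<noteq> x1" "x2 \<noteq> w1" "x2 \<noteq> w2" "x2 \<noteq> w3" "x2 \<noteq> w4" "x2 \<noteq> w5" "w1 \<noteq> x1" "w1 \<noteq> x2" "w1 \<noteq> w2" "w1 \<noteq> w3" "w1 \<noteq> w4" "w1 \<noteq> w5" "w2 \<noteq> x1" "w2 \<noteq> x2" "w2 \<noteq> w1" "w2 \<noteq> w3" "w2 \<noteq> w4" "w2 \<noteq> w5" "w3 \<noteq> x1" "w3 \<noteq> x2" "w3 \<noteq> w1" "w3 \<noteq> w2" "w3 \<noteq> w4" "w3 \<noteq> w5" "w4 \<noteq> x1" "w4 \<noteq> x2" "w4 \<noteq> w1" "w4 \<noteq> w2" "w4 \<noteq> w3" "w4 \<noteq> w5" "w5 \<noteq> x1" "w5 \<noteq> x2" "w5 \<noteq> w1" "w5 \<noteq> w2" "w5 \<noteq> w3" "w5 \<noteq> w4" using d by auto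
  from h have False
    unfolding H1_def H2_def H3_def by (simp add: irr s ne; satx)
  then show False .
qed

lemma core_3_4:
  fixes E :: "'a \<Rightarrow> 'a \<Rightarrow> bool"
  assumes sym: "\<And>u w. E u w = E w u" and irr: "\<And>u. \<not> E u u"
  and d: "distinct [x1,x2,x3,w1,w2,w3,w4]"
  and h: "H1 E {x1,x2,x3} {w1,w2,w3,w4}" "H2 E {x1,x2,x3} {w1,w2,w3,w4}" "H3 E {x1,x2,x3} {w1,w2,w3,w4}"
         "H1 E {w1,w2,w3,w4} {x1,x2,x3}" "H2 E {w1,w2,w3,w4} {x1,x2,x3}" "H3 E {w1,w2,w3,w4} {x1,x2,x3}"
  shows False
proof -
  have s: "E x2 x1 = E x1 x2" "E x3 x1 = E x1 x3" "E x3 x2 = E x2 x3" "E w1 x1 = E x1 w1" "E w1 x2 = E x2 w1" "E w1 x3 = E x3 w1" "E w2 x1 = E x1 w2" "E w2 x2 = E x2 w2" "E w2 x3 = E x3 w2" "E w2 w1 = E w1 w2" "E w3 x1 = E x1 w3" "E w3 x2 = E x2 w3" "E w3 x3 = E x3 w3" "E w3 w1 = E w1 w3" "E w3 w2 = E w2 w3" "E w4 x1 = E x1 w4" "E w4 x2 = E x2 w4" "E w4 x3 = E x3 w4" "E w4 w1 = E w1 w4" "E w4 w2 = E w2 w4" "E w4 w3 = E w3 w4" by (simp_all add: sym)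
  have ne: "x1 \<noteq> x2" "x1 \<noteq> x3" "x1 \<noteq> w1" "x1 \<noteq> w2" "x1 \<noteq> w3" "x1 \<noteq> w4" "x2 \<noteq> x1" "x2 \<noteq> x3" "x2 \<noteq> w1" "x2 \<noteq> w2" "x2 \<noteq> w3" "x2 \<noteq> w4" "x3 \<noteq> x1" "x3 \<noteq> x2" "x3 \<noteq> w1" "x3 \<noteq> w2" "x3 \<noteq> w3" "x3 \<noteq> w4" "w1 \<noteq> x1" "w1 \<noteq> x2" "w1 \<noteq> x3" "w1 \<noteq> w2" "w1 \<noteq> w3" "w1 \<noteq> w4" "w2 \<noteq> x1" "w2 \<noteq> x2" "w2 \<noteq> x3" "w2 \<noteq> w1" "w2 \<noteq> w3" "w2 \<noteq> w4" "w3 \<noteq> x1" "w3 \<noteq> x2" "w3 \<noteq> x3" "w3 \<noteq> w1" "w3 \<noteq> w2" "w3 \<noteq> w4" "w4 \<noteq> x1" "w4 \<noteq> x2" "w4 \<noteq> x3" "w4 \<noteq> w1" "w4 \<noteq> w2" "w4 \<noteq> w3" using d by auto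
  from h have False
    unfolding H1_def H2_def H3_def by (simp add: irr s ne; satx)
  then show False .
qed

lemma core_le:
  fixes E :: "'a \<Rightarrow> 'a \<Rightarrow> bool"
  assumes sym: "\<And>u w. E u w = E w u" and irr: "\<And>u. \<not> E u u"
  and fP: "finite P" and fQ: "finite Q" and disj: "P \<inter> Q = {}"
  and h: "H1 E P Q" "H2 E P Q" "H3 E P Q" "H1 E Q P" "H2 E Q P" "H3 E Q P"
  and le: "card P \<le> card Q" and cs: "card P + card Q \<in> {3,5,7}"
  shows False
proof -
  obtain xs where xs: "set xs = P" "distinct xs" using finite_distinct_list[OF fP] by blast
  obtain ws where ws: "set ws = Q" "distinct ws" using finite_distinct_list[OF fQ] by blast
  have lx: "length xs = card P" using distinct_card[OF xs(2)] xs(1) by simp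
  have lw: "length ws = card Q" using distinct_card[OF ws(2)] ws(1) by simp
  have dd: "distinct (xs @ ws)" using xs ws disj by auto
  from cs have cs3: "card P + card Q = 3 \<or> card P + card Q = 5 \<or> card P + card Q = 7" by simp
  from le cs3 have "(card P = 0 \<and> card Q \<ge> 1) \<or> (card P = 1 \<and> card Q = 2) \<or> (card P = 1 \<and> card Q = 4)
     \<or> (card P = 1 \<and> card Q = 6) \<or> (card P = 2 \<and> card Q = 3) \<or> (card P = 2 \<and> card Q = 5)
     \<or> (card P = 3 \<and> card Q = 4)" by presburger
  then show False
  proof (elim disjE conjE)
    assume "card P = 0" "1 \<le> card Q"
    then have "P = {}" "Q \<noteq> {}" using fP by auto
    with h(6) show False unfolding H3_def by auto
  next
    assume "card P = 1" "card Q = 2"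
    then obtain x1 w1 w2 where "xs = [x1]" "ws = [w1,w2]" using lx lw
      by (auto simp: length_Suc_conv numeral_eq_Suc)
    then show False using core_1_2[of E x1 w1 w2, OF sym irr] dd h xs ws by simp
  next
    assume "card P = 1" "card Q = 4"
    then obtain x1 w1 w2 w3 w4 where "xs = [x1]" "ws = [w1,w2,w3,w4]" using lx lw
      by (auto simp: length_Suc_conv numeral_eq_Suc)
    then show False using core_1_4[of E x1 w1 w2 w3 w4, OF sym irr] dd h xs ws by simp
  next
    assume "card P = 1" "card Q = 6"
    then obtain x1 w1 w2 w3 w4 w5 w6 where "xs = [x1]" "ws = [w1,w2,w3,w4,w5,w6]" using lx lw
      by (auto simp: length_Suc_conv numeral_eq_Suc)
    then show False using core_1_6[of E x1 w1 w2 w3 w4 w5 w6, OF sym irr] dd h xs ws by simp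
  next
    assume "card P = 2" "card Q = 3"
    then obtain x1 x2 w1 w2 w3 where "xs = [x1,x2]" "ws = [w1,w2,w3]" using lx lw
      by (auto simp: length_Suc_conv numeral_eq_Suc)
    then show False using core_2_3[of E x1 x2 w1 w2 w3, OF sym irr] dd h xs ws by simp
  next
    assume "card P = 2" "card Q = 5"
    then obtain x1 x2 w1 w2 w3 w4 w5 where "xs = [x1,x2]" "ws = [w1,w2,w3,w4,w5]" using lx lw
      by (auto simp: length_Suc_conv numeral_eq_Suc)
    then show False using core_2_5[of E x1 x2 w1 w2 w3 w4 w5, OF sym irr] dd h xs ws by simp
  next
    assume "card P = 3" "card Q = 4"
    then obtain x1 x2 x3 w1 w2 w3 w4 where "xs = [x1,x2,x3]" "ws = [w1,w2,w3,w4]" using lx lw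
      by (auto simp: length_Suc_conv numeral_eq_Suc)
    then show False using core_3_4[of E x1 x2 x3 w1 w2 w3 w4, OF sym irr] dd h xs ws by simp
  qed
qed

lemma core:
  fixes E :: "'a \<Rightarrow> 'a \<Rightarrow> bool"
  assumes sym: "\<And>u w. E u w = E w u" and irr: "\<And>u. \<not> E u u"
  and fP: "finite P" and fQ: "finite Q" and disj: "P \<inter> Q = {}"
  and h: "H1 E P Q" "H2 E P Q" "H3 E P Q" "H1 E Q P" "H2 E Q P" "H3 E Q P"
  and cs: "card P + card Q \<in> {3,5,7}"
  shows False
proof (cases "card P \<le> card Q")
  case True
  show ?thesis by (rule core_le[OF sym irr fP fQ disj h True cs])
next
  case False
  have d2: "Q \<inter> P = {}" using disj by blast
  have cs2: "card Q + card P \<in> {3,5,7}" using cs by (simp add: add.commute)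
  show ?thesis using core_le[OF sym irr fQ fP d2 h(4-6) h(1-3) _ cs2] False by simp
qed

lemma card3_eq:
  assumes "finite S" "card S \<le> 3" "p1 \<in> S" "p2 \<in> S" "p3 \<in> S" "p1 \<noteq> p2" "p1 \<noteq> p3" "p2 \<noteq> p3"
  shows "S = {p1,p2,p3}"
proof -
  have sub: "{p1,p2,p3} \<subseteq> S" using assms by auto
  have "card {p1,p2,p3} = 3" using assms by simp
  then have "{p1,p2,p3} = S" using card_seteq[OF assms(1) sub] assms(2) by simp
  then show ?thesis by simp
qed

lemma side:
  fixes E :: "'a \<Rightarrow> 'a \<Rightarrow> bool"
  assumes sym: "\<And>u w. E u w = E w u" and irr: "\<And>u. \<not> E u u"
  and fin: "finite V"
  and NoT: "\<And>s1 s2 s3. {s1,s2,s3} \<subseteq> V \<Longrightarrow> (\<forall>u\<in>V. E u s1 \<or> E u s2 \<or> E u s3) \<Longrightarrow> False"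
  and Crit: "\<And>x. x \<in> V \<Longrightarrow> \<exists>S \<subseteq> V - {x}. card S \<le> 3 \<and> (\<forall>u\<in>V-{x}. \<exists>s\<in>S. E u s) \<and> (\<forall>s\<in>S. \<not> E x s)"
  and VV: "V = insert v (P \<union> Q \<union> {a,b,c})"
  and Ev: "\<And>u. E v u \<longleftrightarrow> u \<in> P \<or> u \<in> Q"
  and Ea: "\<And>u. E a u \<longleftrightarrow> u = b \<or> u \<in> P"
  and Ec: "\<And>u. E c u \<longleftrightarrow> u = b \<or> u \<in> Q"
  and Eb: "\<And>u. E b u \<longleftrightarrow> u = a \<or> u = c"
  and disj: "P \<inter> Q = {}"
  and nA: "v \<notin> P \<union> Q" "a \<notin> P \<union> Q" "b \<notin> P \<union> Q" "c \<notin> P \<union> Q"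
  and dst: "v \<noteq> a" "v \<noteq> b" "v \<noteq> c" "a \<noteq> b" "a \<noteq> c" "b \<noteq> c"
  shows "H1 E P Q \<and> H2 E P Q \<and> H3 E P Q"
proof (intro conjI)
  show "H1 E P Q" unfolding H1_def
  proof
    fix z assume z: "z \<in> Q"
    show "\<exists>u\<in>P. \<not> E z u"
    proof (rule ccontr)
      assume "\<not> (\<exists>u\<in>P. \<not> E z u)"
      then have zP: "\<forall>u\<in>P. E z u" by blast
      show False
      proof (rule NoT[of b c z])
        show "{b,c,z} \<subseteq> V" using VV z by auto
        show "\<forall>u\<in>V. E u b \<or> E u c \<or> E u z"
        proof
          fix u assume "u \<in> V"
          then have "u = v \<or> u \<in> P \<or> u \<in> Q \<or> u = a \<or> u = b \<or> u = c" using VV by auto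
          then show "E u b \<or> E u c \<or> E u z"
            using zP z Ev[of z] Ea[of b] Ec[of u] Eb[of c] sym[of u z] sym[of u b] sym[of u c] by auto
        qed
      qed
    qed
  qed
  show "H2 E P Q" unfolding H2_def
  proof (intro ballI impI)
    fix y z assume y: "y \<in> P" and z: "z \<in> Q" and yz: "E y z"
    show "\<exists>u\<in>P. \<not> E y u \<and> \<not> E z u"
    proof (rule ccontr)
      assume "\<not> (\<exists>u\<in>P. \<not> E y u \<and> \<not> E z u)"
      then have cov: "\<forall>u\<in>P. E y u \<or> E z u" by blast
      show False
      proof (rule NoT[of c y z])
        show "{c,y,z} \<subseteq> V" using VV y z by auto
        show "\<forall>u\<in>V. E u c \<or> E u y \<or> E u z"
        proof
          fix u assume "u \<in> V"
          then have "u = v \<or> u \<in> P \<or> u \<in> Q \<or> u = a \<or> u = b \<or> u = c" using VV by auto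
          then show "E u c \<or> E u y \<or> E u z"
            using cov y z Ev[of y] Ea[of y] Ec[of u] Ec[of z] Eb[of c] sym[of u z] sym[of u y] sym[of u c] by auto
        qed
      qed
    qed
  qed
  show "H3 E P Q" unfolding H3_def
  proof
    fix x assume x: "x \<in> P"
    have xV: "x \<in> V" using VV x by auto
    obtain S where S: "S \<subseteq> V - {x}" "card S \<le> 3" "\<forall>u\<in>V-{x}. \<exists>s\<in>S. E u s" "\<forall>s\<in>S. \<not> E x s"
      using Crit[OF xV] by blast
    have fS: "finite S" using S(1) fin finite_subset by blast
    have Exa: "E x a" using Ea[of x] x sym by auto
    have Exv: "E x v" using Ev[of x] x sym by auto
    have aS: "a \<notin> S" using S(4) Exa by auto
    have vS: "v \<notin> S" using S(4) Exv by auto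
    have xb: "x \<noteq> b" using x nA by auto
    have bV: "b \<in> V - {x}" using VV xb by auto
    obtain s0 where s0: "s0 \<in> S" "E b s0" using S(3) bV sym by blast
    have cS: "c \<in> S" using s0 Eb aS by auto
    have vV: "v \<in> V - {x}" using VV x nA by auto
    obtain s1 where s1: "s1 \<in> S" "E v s1" using S(3) vV sym by blast
    have s1A: "s1 \<in> P \<or> s1 \<in> Q" using s1 Ev by auto
    have SV: "\<And>s. s \<in> S \<Longrightarrow> s \<noteq> x \<and> \<not> E x s" using S by auto
    show "\<exists>z\<in>Q. \<not> E x z \<and> ((\<forall>u\<in>P. u \<noteq> x \<longrightarrow> E z u) \<or>
     (\<exists>y\<in>P. y \<noteq> x \<and> \<not> E x y \<and> E y z \<and> (\<forall>u\<in>P. u \<noteq> x \<longrightarrow> E y u \<or> E z u)))"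
    proof (cases "\<exists>y\<in>S. y \<in> P")
      case True
      then obtain y where y: "y \<in> S" "y \<in> P" by blast
      have yV: "y \<in> V - {x}" using S(1) y by auto
      obtain t where t: "t \<in> S" "E y t" using S(3) yV by blast
      have tv: "t \<noteq> v" using t vS by auto
      have ta: "t \<noteq> a" using t aS by auto
      have tb: "t \<noteq> b" using t(2) Eb[of y] sym[of y b] y(2) nA by auto
      have tc: "t \<noteq> c" using t(2) Ec[of y] sym[of y c] y(2) disj nA by auto
      have tA: "t \<in> P \<or> t \<in> Q" using t(1) S(1) VV tv ta tb tc by auto
      have ty: "t \<noteq> y" using t(2) irr by auto
      have cy: "c \<noteq> y" "c \<noteq> t" using y(2) tA nA by auto
      have Seq: "S = {c,y,t}" using card3_eq[OF fS S(2) cS y(1) t(1) cy(1) cy(2) ty[symmetric]] .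
      have cV: "c \<in> V - {x}" using VV x nA by auto
      obtain t' where t': "t' \<in> S" "E c t'" using S(3) cV sym by blast
      have "t' = t" using t' Seq irr Ec[of y] y(2) disj nA by auto
      then have tQ: "t \<in> Q" using t' Ec tb by auto
      have nxt: "\<not> E x t" using SV t(1) by auto
      have yx: "y \<noteq> x" "\<not> E x y" using SV y(1) by auto
      have cov: "\<forall>u\<in>P. u \<noteq> x \<longrightarrow> E y u \<or> E t u"
      proof (intro ballI impI)
          fix u assume u: "u \<in> P" "u \<noteq> x"
          then have "u \<in> V - {x}" using VV by auto
          then obtain s where s: "s \<in> S" "E u s" using S(3) by blast
          have "s \<noteq> c" using s(2) Ec[of u] sym[of u c] u disj nA by auto
          then have "s = y \<or> s = t" using s(1) Seq by auto
          then show "E y u \<or> E t u" using s(2) sym by auto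
      qed
      show ?thesis using tQ nxt yx y(2) t(2) cov by blast
    next
      case False
      then have s1Q: "s1 \<in> Q" using s1A s1(1) by auto
      have aV: "a \<in> V - {x}" using VV x nA by auto
      obtain t where t: "t \<in> S" "E a t" using S(3) aV by blast
      have tb: "t = b" using t False Ea by auto
      have d3: "b \<noteq> c" "b \<noteq> s1" "c \<noteq> s1" using dst s1Q nA by auto
      have Seq: "S = {b,c,s1}" using card3_eq[OF fS S(2) _ cS s1(1) d3] t tb by auto
      have nxt: "\<not> E x s1" using SV s1(1) by auto
      have cov: "\<forall>u\<in>P. u \<noteq> x \<longrightarrow> E s1 u"
      proof (intro ballI impI)
        fix u assume u: "u \<in> P" "u \<noteq> x"
        then have "u \<in> V - {x}" using VV by auto
        then obtain s where s: "s \<in> S" "E u s" using S(3) by blast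
        have "s \<noteq> c" using s(2) Ec[of u] sym[of u c] u disj nA by auto
        moreover have "s \<noteq> b" using s(2) Eb[of u] sym[of u b] u nA by auto
        ultimately have "s = s1" using s(1) Seq by auto
        then show "E s1 u" using s(2) sym by auto
      qed
      show ?thesis using s1Q nxt cov by blast
    qed
  qed
qed

theorem mainTheorem5:
  fixes V :: "'a set" and E :: "'a \<Rightarrow> 'a \<Rightarrow> bool"
  assumes "simple_graph V E"
    and "V \<noteq> {}"
    and "m_gamma_t_critical 4 V E"
    and "card V = max_deg V E + 4"
    and "max_deg V E \<in> {3, 5, 7}"
    and "min_deg V E \<ge> 2"
  shows False
proof -
  have fin: "finite V" and inV: "\<And>u w. E u w \<Longrightarrow> u \<in> V \<and> w \<in> V"
    and sym: "\<And>u w. E u w = E w u" and irr: "\<And>u. \<not> E u u"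
    using assms(1) unfolding simple_graph_def by blast+
  define D where "D = max_deg V E"
  have degle: "\<And>u. u \<in> V \<Longrightarrow> deg V E u \<le> D"
    unfolding D_def max_deg_def using fin by (intro Max_ge) auto
  have "D \<in> deg V E ` V" unfolding D_def max_deg_def using fin assms(2) by (intro Max_in) auto
  then obtain v where v: "v \<in> V" "deg V E v = D" by auto
  have degge: "\<And>u. u \<in> V \<Longrightarrow> 2 \<le> deg V E u"
  proof -
    fix u assume "u \<in> V"
    then have "min_deg V E \<le> deg V E u" unfolding min_deg_def using fin by (intro Min_le) auto
    then show "2 \<le> deg V E u" using assms(6) by simp
  qed
  have g4: "gamma_t V E = enat 4" and crit: "gamma_t_critical V E"
    using assms(3) unfolding m_gamma_t_critical_def by auto
  have nleaf: "\<And>u. \<not> is_leaf V E u" using degge unfolding is_leaf_def by fastforce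
  have critlt: "\<And>w. w \<in> V \<Longrightarrow> gamma_t (V - {w}) E < enat 4"
    using crit g4 nleaf unfolding gamma_t_critical_def by auto
  have NoT: "\<And>S. S \<subseteq> V \<Longrightarrow> card S \<le> 3 \<Longrightarrow> (\<forall>u\<in>V. \<exists>s\<in>S. E u s) \<Longrightarrow> False"
  proof -
    fix S assume S: "S \<subseteq> V" "card S \<le> 3" "\<forall>u\<in>V. \<exists>s\<in>S. E u s"
    then have "total_dom_set V E S" unfolding total_dom_set_def by auto
    then have "gamma_t V E \<le> enat (card S)" unfolding gamma_t_def by (intro INF_lower) auto
    with g4 S(2) show False by simp
  qed
  have NoT3: "\<And>s1 s2 s3. {s1,s2,s3} \<subseteq> V \<Longrightarrow> (\<forall>u\<in>V. E u s1 \<or> E u s2 \<or> E u s3) \<Longrightarrow> False"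
  proof -
    fix s1 s2 s3 assume a: "{s1,s2,s3} \<subseteq> V" "\<forall>u\<in>V. E u s1 \<or> E u s2 \<or> E u s3"
    have "card {s1,s2,s3} \<le> 3" by (auto simp: card_insert_if)
    moreover have "\<forall>u\<in>V. \<exists>s\<in>{s1,s2,s3}. E u s" using a(2) by auto
    ultimately show False using NoT[OF a(1)] by blast
  qed
  have Crit: "\<And>x. x \<in> V \<Longrightarrow> \<exists>S \<subseteq> V - {x}. card S \<le> 3 \<and> (\<forall>u\<in>V-{x}. \<exists>s\<in>S. E u s) \<and> (\<forall>s\<in>S. \<not> E x s)"
  proof -
    fix x assume x: "x \<in> V"
    have "\<exists>S\<in>{S. total_dom_set (V-{x}) E S}. enat (card S) < enat 4"
      using critlt[OF x] unfolding gamma_t_def by (simp add: INF_less_iff)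
    then obtain S where S: "S \<subseteq> V - {x}" "\<forall>u\<in>V-{x}. \<exists>s\<in>S. E u s" "card S < 4"
      unfolding total_dom_set_def by auto
    have "\<forall>s\<in>S. \<not> E x s"
    proof (rule ccontr)
      assume "\<not> (\<forall>s\<in>S. \<not> E x s)"
      then obtain s where "s \<in> S" "E x s" by blast
      then have "\<forall>u\<in>V. \<exists>s\<in>S. E u s" using S(2) by blast
      then show False using NoT[of S] S by auto
    qed
    then show "\<exists>S \<subseteq> V - {x}. card S \<le> 3 \<and> (\<forall>u\<in>V-{x}. \<exists>s\<in>S. E u s) \<and> (\<forall>s\<in>S. \<not> E x s)"
      using S by (intro exI[of _ S]) auto
  qed
  define A where "A = {u. E v u}"
  have AV: "A \<subseteq> V" using inV unfolding A_def by auto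
  have vA: "v \<notin> A" using irr unfolding A_def by auto
  have fA: "finite A" using AV fin finite_subset by blast
  have "nbhd V E v = A" unfolding nbhd_def A_def using inV by auto
  then have cardA: "card A = D" using v(2) unfolding deg_def by simp
  define R where "R = V - insert v A"
  have cardV: "card V = D + 4" using assms(4) D_def by simp
  have "card R = card V - card (insert v A)" unfolding R_def using fin AV v(1)
    by (intro card_Diff_subset) (auto intro: finite_subset)
  then have cardR: "card R = 3" using cardV cardA fA vA by simp
  have VR: "V = insert v (A \<union> R)" unfolding R_def using AV v(1) by auto
  obtain Sv where Sv: "Sv \<subseteq> V - {v}" "card Sv \<le> 3" "\<forall>u\<in>V-{v}. \<exists>s\<in>Sv. E u s" "\<forall>s\<in>Sv. \<not> E v s"
    using Crit[OF v(1)] by blast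
  have SvR: "Sv \<subseteq> R" using Sv(1) Sv(4) unfolding R_def A_def by auto
  have domR: "\<forall>u\<in>V-{v}. \<exists>s\<in>R. E u s" using Sv(3) SvR by blast
  obtain r1 r2 r3 where R3: "R = {r1,r2,r3}" "r1 \<noteq> r2" "r2 \<noteq> r3" "r1 \<noteq> r3"
    using cardR card_3_iff by metis
  have rV: "r1 \<in> V - {v}" "r2 \<in> V - {v}" "r3 \<in> V - {v}" using R3(1) unfolding R_def by auto
  have n1: "E r1 r2 \<or> E r1 r3" using domR rV(1) R3(1) irr by auto
  have n2: "E r2 r1 \<or> E r2 r3" using domR rV(2) R3(1) irr by auto
  have n3: "E r3 r1 \<or> E r3 r2" using domR rV(3) R3(1) irr by auto
  have "\<exists>a b c. R = {a,b,c} \<and> a \<noteq> b \<and> b \<noteq> c \<and> a \<noteq> c \<and> E b a \<and> E b c"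
  proof (cases "E r1 r2 \<and> E r1 r3")
    case True
    then show ?thesis using R3 by (intro exI[of _ r2] exI[of _ r1] exI[of _ r3]) auto
  next
    case False
    show ?thesis
    proof (cases "E r1 r2")
      case True
      then have "E r3 r2" using False n3 sym by auto
      then show ?thesis using R3 True sym by (intro exI[of _ r1] exI[of _ r2] exI[of _ r3]) auto
    next
      case False2: False
      then have "E r1 r3" "E r2 r3" using n1 n2 sym by auto
      then show ?thesis using R3 sym by (intro exI[of _ r1] exI[of _ r3] exI[of _ r2]) auto
    qed
  qed
  then obtain a b c where abc: "R = {a,b,c}" "a \<noteq> b" "b \<noteq> c" "a \<noteq> c" "E b a" "E b c" by blast
  have center: "\<And>r r' r'' x. {r,r',r''} = R \<Longrightarrow> E r r' \<Longrightarrow> E r r'' \<Longrightarrow> x \<in> A \<Longrightarrow> \<not> E r x"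
  proof
    fix r r' r'' x assume h: "{r,r',r''} = R" "E r r'" "E r r''" "x \<in> A" "E r x"
    show False
    proof (rule NoT3[of v x r])
      show "{v,x,r} \<subseteq> V" using v(1) h AV unfolding R_def by auto
      show "\<forall>u\<in>V. E u v \<or> E u x \<or> E u r"
      proof
        fix u assume "u \<in> V"
        then have "u = v \<or> u \<in> A \<or> u = r \<or> u = r' \<or> u = r''" using VR h(1) by auto
        then show "E u v \<or> E u x \<or> E u r" using h sym[of u v] sym[of u r] unfolding A_def by auto
      qed
    qed
  qed
  have noAb: "\<And>x. x \<in> A \<Longrightarrow> \<not> E b x" using center[of b a c] abc by auto
  have abcV: "a \<in> V - {v}" "b \<in> V - {v}" "c \<in> V - {v}" "a \<notin> A" "b \<notin> A" "c \<notin> A"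
    using abc(1) unfolding R_def by auto
  have Dge: "D \<ge> 3" using assms(5) D_def by auto
  then have "A \<noteq> {}" using cardA by auto
  then obtain x0 where x0: "x0 \<in> A" by blast
  have nac: "\<not> E a c"
  proof
    assume ac: "E a c"
    have na: "\<not> E a x0" using center[of a b c x0] abc ac sym x0 by (auto simp: insert_commute)
    have nc: "\<not> E c x0" using center[of c a b x0] abc ac sym x0 by (auto simp: insert_commute)
    have "x0 \<in> V - {v}" using x0 AV vA by auto
    then obtain s where "s \<in> R" "E x0 s" using domR by blast
    then show False using na nc noAb[OF x0] abc(1) sym by auto
  qed
  have Axor: "\<And>x. x \<in> A \<Longrightarrow> (E x a \<or> E x c) \<and> \<not> (E x a \<and> E x c)"
  proof
    fix x assume x: "x \<in> A"
    have "x \<in> V - {v}" using x AV vA by auto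
    then obtain s where "s \<in> R" "E x s" using domR by blast
    then show "E x a \<or> E x c" using noAb[OF x] abc(1) sym by auto
    show "\<not> (E x a \<and> E x c)"
    proof
      assume xac: "E x a \<and> E x c"
      show False
      proof (rule NoT3[of v x a])
        show "{v,x,a} \<subseteq> V" using v(1) x AV abcV by auto
        show "\<forall>u\<in>V. E u v \<or> E u x \<or> E u a"
        proof
          fix u assume "u \<in> V"
          then have "u = v \<or> u \<in> A \<or> u = a \<or> u = b \<or> u = c" using VR abc(1) by auto
          then show "E u v \<or> E u x \<or> E u a" using x xac abc sym[of u v] sym[of u x] sym[of u a] unfolding A_def by auto
        qed
      qed
    qed
  qed
  define P where "P = {x \<in> A. E x a}"
  define Q where "Q = {x \<in> A. E x c}"
  have PQA: "A = P \<union> Q" using Axor unfolding P_def Q_def by auto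
  have disj: "P \<inter> Q = {}" using Axor unfolding P_def Q_def by auto
  have VV: "V = insert v (P \<union> Q \<union> {a,b,c})" using VR PQA abc(1) by auto
  have Ev: "\<And>u. E v u \<longleftrightarrow> u \<in> P \<or> u \<in> Q" using PQA unfolding A_def by auto
  have Eb: "\<And>u. E b u \<longleftrightarrow> u = a \<or> u = c"
  proof
    fix u assume bu: "E b u"
    then have "u \<in> V" using inV by blast
    moreover have "u \<noteq> v" using bu abcV sym unfolding A_def by auto
    moreover have "u \<notin> A" using bu noAb sym by auto
    moreover have "u \<noteq> b" using bu irr by auto
    ultimately show "u = a \<or> u = c" using VR abc(1) by auto
  next
    fix u assume "u = a \<or> u = c" then show "E b u" using abc by auto
  qed
  have Ea: "\<And>u. E a u \<longleftrightarrow> u = b \<or> u \<in> P"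
  proof
    fix u assume au: "E a u"
    then have "u \<in> V" using inV by blast
    moreover have "u \<noteq> v" using au abcV sym unfolding A_def by auto
    moreover have "u \<noteq> a" using au irr by auto
    moreover have "u \<noteq> c" using au nac by auto
    ultimately show "u = b \<or> u \<in> P" using VR abc(1) au sym unfolding P_def by auto
  next
    fix u assume "u = b \<or> u \<in> P" then show "E a u" using abc sym unfolding P_def by auto
  qed
  have Ec: "\<And>u. E c u \<longleftrightarrow> u = b \<or> u \<in> Q"
  proof
    fix u assume cu: "E c u"
    then have "u \<in> V" using inV by blast
    moreover have "u \<noteq> v" using cu abcV sym unfolding A_def by auto
    moreover have "u \<noteq> c" using cu irr by auto
    moreover have "u \<noteq> a" using cu nac sym by auto
    ultimately show "u = b \<or> u \<in> Q" using VR abc(1) cu sym unfolding Q_def by auto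
  next
    fix u assume "u = b \<or> u \<in> Q" then show "E c u" using abc sym unfolding Q_def by auto
  qed
  have nA: "v \<notin> P \<union> Q" "a \<notin> P \<union> Q" "b \<notin> P \<union> Q" "c \<notin> P \<union> Q" using vA abcV PQA by auto
  have dst: "v \<noteq> a" "v \<noteq> b" "v \<noteq> c" "a \<noteq> b" "a \<noteq> c" "b \<noteq> c" using abcV abc by auto
  have s1: "H1 E P Q \<and> H2 E P Q \<and> H3 E P Q"
    by (rule side[OF sym irr fin NoT3 Crit VV Ev Ea Ec Eb disj nA dst]) 
  have VV2: "V = insert v (Q \<union> P \<union> {c,b,a})" using VV by auto
  have s2: "H1 E Q P \<and> H2 E Q P \<and> H3 E Q P"
    by (rule side[OF sym irr fin NoT3 Crit VV2]) (use Ev Ea Ec Eb disj nA dst in auto)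
  have fP: "finite P" "finite Q" using fA PQA by auto
  have "card P + card Q = D" using cardA PQA disj fP by (simp add: card_Un_disjoint)
  then have "card P + card Q \<in> {3,5,7}" using assms(5) D_def by simp
  then show False using core[where E=E, OF sym irr fP(1) fP(2) disj] s1 s2 by blast
qed

end
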